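(* Let $a,b\in\mathcal{A}$ be distinct letters with $p_a>0$ and $p_b>0$, let $S$ be a scoring function and $T$ the associated function defined in the context. If there exists $\epsilon>0$ with $$\lambda(S)-\lambda(S-\epsilon T)>0,$$ then $\mathrm{VAR}[L_n(S)]=\Theta(n)$.
   Context: Let $\mathcal{A}$ be a finite alphabet and $\mathcal{A}^*=\mathcal{A}\cup\{G\}$, where $G$ is a gap symbol. A scoring function is a symmetric map $S:\mathcal{A}^*\times\mathcal{A}^*\to\mathbb{R}$. For strings $x=x_1\dots x_m$, $y=y_1\dots y_{m'}$ over $\mathcal{A}$, an alignment $\pi$ is a sequence $((\mu_1,\nu_1),\dots,(\mu_k,\nu_k))$, $k\ge0$, with $1\le\mu_1<\dots<\mu_k\le m$ and $1\le\nu_1<\dots<\nu_k\le m'$; its score is $S_\pi(x,y)=\sum_{i=1}^k S(x_{\mu_i},y_{\nu_i})+\sum_{j\notin\{\mu_i\}}S(x_j,G)+\sum_{j\notin\{\nu_i\}}S(G,y_j)$, and $L_S(x,y)=\max_\pi S_\pi(x,y)$. Let $X=X_1\dots X_n$, $Y=Y_1\dots Y_n$ where all $2n$ letters are i.i.d. with $P(X_i=c)=P(Y_j=c)=p_c$. Put $L_n(S)=L_S(X,Y)$, $\lambda_n(S)=E[L_n(S)]/n$, $\lambda(S)=\lim_n\lambda_n(S)$ (the limit exists). The function $T:\mathcal{A}^*\times\mathcal{A}^*\to\mathbb{R}$ is defined by $T(a,c)=T(c,a)=S(b,c)-S(a,c)$ for all $c\in\mathcal{A}^*$ with $c\neq a$,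 $T(a,a)=2(S(b,a)-S(a,a))$, and $T(d,c)=0$ whenever $d\neq a$ and $c\neq a$; $S-\epsilon T$ is the pointwise combination. *)

theory Defs
  imports "HOL-Probability.Probability" "HOL-Library.Landau_Symbols"
begin

text \<open>Letters have type 'a; the extended alphabet A* = A \<union> {G} is 'a option,
 with None playing the role of the gap symbol G.  Positions in strings are 0-indexed.\<close>

definition alignments :: "'a list \<Rightarrow> 'a list \<Rightarrow> (nat \<times> nat) list set" where
  "alignments x y = {\<pi>. sorted_wrt (\<lambda>(i, j) (k, l). i < k \<and> j < l) \<pi> \<and>
      (\<forall>(i, j) \<in> set \<pi>. i < length x \<and> j < length y)}"

definition align_score ::
  "('a option \<Rightarrow> 'a option \<Rightarrow> real) \<Rightarrow> 'a list \<Rightarrow> 'a list \<Rightarrow> (nat \<times> nat) list \<Rightarrow> real" where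
  "align_score S x y \<pi> =
     (\<Sum>(i, j) \<leftarrow> \<pi>. S (Some (x ! i)) (Some (y ! j)))
     + (\<Sum>i \<in> {..<length x} - fst ` set \<pi>. S (Some (x ! i)) None)
     + (\<Sum>j \<in> {..<length y} - snd ` set \<pi>. S None (Some (y ! j)))"

definition L_S :: "('a option \<Rightarrow> 'a option \<Rightarrow> real) \<Rightarrow> 'a list \<Rightarrow> 'a list \<Rightarrow> real" where
  "L_S S x y = Max (align_score S x y ` alignments x y)"

definition XY_pmf :: "'a pmf \<Rightarrow> nat \<Rightarrow> ('a list \<times> 'a list) pmf" where
  "XY_pmf p n = pair_pmf (replicate_pmf n p) (replicate_pmf n p)"

definition Ln_mean :: "'a pmf \<Rightarrow> ('a option \<Rightarrow> 'a option \<Rightarrow> real) \<Rightarrow> nat \<Rightarrow> real" where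
  "Ln_mean p S n = measure_pmf.expectation (XY_pmf p n) (\<lambda>(x, y). L_S S x y)"

definition Ln_var :: "'a pmf \<Rightarrow> ('a option \<Rightarrow> 'a option \<Rightarrow> real) \<Rightarrow> nat \<Rightarrow> real" where
  "Ln_var p S n = measure_pmf.variance (XY_pmf p n) (\<lambda>(x, y). L_S S x y)"

definition lambda_n :: "'a pmf \<Rightarrow> ('a option \<Rightarrow> 'a option \<Rightarrow> real) \<Rightarrow> nat \<Rightarrow> real" where
  "lambda_n p S n = Ln_mean p S n / real n"

definition lambda :: "'a pmf \<Rightarrow> ('a option \<Rightarrow> 'a option \<Rightarrow> real) \<Rightarrow> real" where
  "lambda p S = lim (lambda_n p S)"

definition T_fun :: "('a option \<Rightarrow> 'a option \<Rightarrow> real) \<Rightarrow> 'a \<Rightarrow> 'a \<Rightarrow> 'a option \<Rightarrow> 'a option \<Rightarrow> real" where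
  "T_fun S a b d c =
     (if d = Some a \<and> c = Some a then 2 * (S (Some b) (Some a) - S (Some a) (Some a))
      else if d = Some a then S (Some b) c - S (Some a) c
      else if c = Some a then S (Some b) d - S (Some a) d
      else 0)"

end

theory Submission
  imports Defs
begin


lemma superadd_mult:
  fixes a :: "nat \<Rightarrow> real"
  assumes sup: "\<And>m n. a (m + n) \<ge> a m + a n"
  shows "a (q * k + r) \<ge> real q * a k + a r"
proof (induction q)
  case 0 then show ?case by simp
next
  case (Suc q)
  have "a (Suc q * k + r) = a (k + (q * k + r))" by (simp add: algebra_simps)
  also have "\<dots> \<ge> a k + a (q * k + r)" using sup by blast
  finally show ?case using Suc by (simp add: algebra_simps)
qed

lemma fekete:
  fixes a :: "nat \<Rightarrow> real"
  assumes sup: "\<And>m n. a (m + n) \<ge> a m + a n"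
    and bnd: "\<And>n. \<bar>a n\<bar> \<le> C * real n"
  shows "convergent (\<lambda>n. a n / real n)"
proof -
  define s where "s = (SUP n\<in>{1..}. a n / real n)"
  have bdd: "bdd_above ((\<lambda>n. a n / real n) ` {1..})"
  proof (rule bdd_aboveI2)
    fix n :: nat assume "n \<in> {1..}"
    then have "n > 0" by auto
    have "a n \<le> C * real n" using bnd[of n] by auto
    then show "a n / real n \<le> C" using \<open>n>0\<close> by (simp add: divide_le_eq)
  qed
  have le_s: "a n / real n \<le> s" if "n \<ge> 1" for n
    unfolding s_def by (rule cSUP_upper[OF _ bdd]) (use that in auto)
  have "(\<lambda>n. a n / real n) \<longlonglongrightarrow> s"
  proof (rule LIMSEQ_I)
    fix r :: real assume r: "r > 0"
    have "s - r/2 < s" using r by simp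
    then obtain k where k1: "k \<in> {1..}" and kk: "s - r/2 < a k / real k"
    proof -
      have ne: "({1..}::nat set) \<noteq> {}" by auto
      have "\<exists>x\<in>{1..}. s - r/2 < a x / real x"
        using less_cSUP_iff[OF ne bdd, of "s - r/2"] \<open>s - r/2 < s\<close> unfolding s_def by simp
      then show ?thesis using that by blast
    qed
    have kpos: "k > 0" using k1 by auto
    define B where "B = \<bar>a k\<bar> + \<bar>C\<bar> * real k"
    have Bnn: "B \<ge> 0" unfolding B_def by simp
    obtain N :: nat where N: "N > 2 * B / r" using reals_Archimedean2 by blast
    show "\<exists>N. \<forall>n\<ge>N. norm (a n / real n - s) < r"
    proof (intro exI[of _ "Suc N"] allI impI)
      fix n assume nN: "n \<ge> Suc N"
      then have npos: "real n > 0" by simp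
      define q where "q = n div k"
      define rr where "rr = n mod k"
      have ndec: "n = q * k + rr" unfolding q_def rr_def by simp
      have rrk: "rr < k" unfolding rr_def using kpos by simp
      have "a n \<ge> real q * a k + a rr" using superadd_mult[OF sup, of q k rr] ndec by simp
      moreover have "a rr \<ge> - (\<bar>C\<bar> * real k)"
      proof -
        have "\<bar>a rr\<bar> \<le> C * real rr" by (rule bnd)
        also have "\<dots> \<le> \<bar>C\<bar> * real k" using rrk
          by (intro mult_mono) auto
        finally show ?thesis by linarith
      qed
      moreover have "real q * a k \<ge> real n * (a k / real k) - \<bar>a k\<bar>"
      proof -
        have "real n = real q * real k + real rr" using ndec by simp
        then have "real n * (a k / real k) = real q * a k + real rr * (a k / real k)"
          using kpos by (simp add: field_simps)
        moreover have "real rr * (a k / real k) \<le> \<bar>a k\<bar>"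
        proof -
          have "real rr * (a k / real k) \<le> \<bar>real rr * (a k / real k)\<bar>" by (rule abs_ge_self)
          also have "\<dots> = real rr / real k * \<bar>a k\<bar>" by (simp add: abs_mult)
          also have "\<dots> \<le> 1 * \<bar>a k\<bar>" using rrk kpos
            by (intro mult_right_mono) auto
          finally show ?thesis by simp
        qed
        ultimately show ?thesis by linarith
      qed
      ultimately have "a n \<ge> real n * (a k / real k) - B" unfolding B_def by linarith
      then have "a n / real n \<ge> (real n * (a k / real k) - B) / real n"
        using npos by (intro divide_right_mono) auto
      moreover have "(real n * (a k / real k) - B) / real n = a k / real k - B / real n"
        using npos by (simp add: field_simps)
      ultimately have low: "a n / real n \<ge> a k / real k - B / real n" by simp
      have "B / real n < r / 2"
      proof -
        have "real n > 2 * B / r" using N nN by linarith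
        then have "2 * B < r * real n" using r by (simp add: field_simps)
        then show ?thesis using npos by (simp add: field_simps)
      qed
      with low kk have "a n / real n > s - r" by linarith
      moreover have "a n / real n \<le> s" using le_s nN by simp
      ultimately show "norm (a n / real n - s) < r" using r by simp
    qed
  qed
  then show ?thesis unfolding convergent_def by blast
qed




abbreviation "Rel \<equiv> (\<lambda>(i::nat, j::nat) (k, l). i < k \<and> j < l)"

lemma al_def2: "\<pi> \<in> alignments x y \<longleftrightarrow> sorted_wrt Rel \<pi> \<and> (\<forall>(i, j) \<in> set \<pi>. i < length x \<and> j < length y)"
  by (simp add: alignments_def)

lemma al_len: "length x = length x' \<Longrightarrow> length y = length y' \<Longrightarrow> alignments x y = alignments x' y'"
  by (simp add: alignments_def)

lemma al_nil: "[] \<in> alignments x y" by (simp add: alignments_def)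

lemma al_distinct_fst:
  assumes "\<pi> \<in> alignments x y" shows "distinct (map fst \<pi>)"
proof -
  have "sorted_wrt Rel \<pi>" using assms by (simp add: alignments_def)
  then have "sorted_wrt (\<lambda>p q. fst p < fst q) \<pi>"
    by (rule sorted_wrt_mono_rel[rotated]) auto
  then have "sorted_wrt (<) (map fst \<pi>)" by (simp add: sorted_wrt_map)
  then show ?thesis by (simp add: strict_sorted_iff)
qed

lemma al_distinct_snd:
  assumes "\<pi> \<in> alignments x y" shows "distinct (map snd \<pi>)"
proof -
  have "sorted_wrt Rel \<pi>" using assms by (simp add: alignments_def)
  then have "sorted_wrt (\<lambda>p q. snd p < snd q) \<pi>"
    by (rule sorted_wrt_mono_rel[rotated]) auto
  then have "sorted_wrt (<) (map snd \<pi>)" by (simp add: sorted_wrt_map)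
  then show ?thesis by (simp add: strict_sorted_iff)
qed

lemma al_distinct: "\<pi> \<in> alignments x y \<Longrightarrow> distinct \<pi>"
  using al_distinct_fst distinct_map by blast

lemma al_length: assumes "\<pi> \<in> alignments x y" shows "length \<pi> \<le> length x"
proof -
  have "length \<pi> = card (set (map fst \<pi>))"
    using al_distinct_fst[OF assms] distinct_card[of "map fst \<pi>"] by simp
  also have "\<dots> \<le> card {..<length x}"
    using assms by (intro card_mono) (auto simp: alignments_def)
  finally show ?thesis by simp
qed

lemma al_finite: "finite (alignments x y)"
proof -
  have "alignments x y \<subseteq> {xs. set xs \<subseteq> {..<length x} \<times> {..<length y} \<and> distinct xs}"
    using al_distinct by (auto simp: alignments_def)
  moreover have "finite {xs. set xs \<subseteq> {..<length x} \<times> {..<length y} \<and> distinct xs}"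
    by (rule finite_subset_distinct) auto
  ultimately show ?thesis by (rule finite_subset)
qed

definition psum :: "('a option \<Rightarrow> 'a option \<Rightarrow> real) \<Rightarrow> 'a list \<Rightarrow> 'a list \<Rightarrow> (nat \<times> nat) list \<Rightarrow> real" where
  "psum S x y \<pi> = (\<Sum>(i, j) \<in> set \<pi>. S (Some (x ! i)) (Some (y ! j)))"
definition gx :: "('a option \<Rightarrow> 'a option \<Rightarrow> real) \<Rightarrow> 'a list \<Rightarrow> (nat \<times> nat) list \<Rightarrow> real" where
  "gx S x \<pi> = (\<Sum>i \<in> {..<length x} - fst ` set \<pi>. S (Some (x ! i)) None)"
definition gy :: "('a option \<Rightarrow> 'a option \<Rightarrow> real) \<Rightarrow> 'a list \<Rightarrow> (nat \<times> nat) list \<Rightarrow> real" where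
  "gy S y \<pi> = (\<Sum>j \<in> {..<length y} - snd ` set \<pi>. S None (Some (y ! j)))"

lemma score_eq: "\<pi> \<in> alignments x y \<Longrightarrow> align_score S x y \<pi> = psum S x y \<pi> + gx S x \<pi> + gy S y \<pi>"
  unfolding align_score_def psum_def gx_def gy_def
  by (simp add: sum_list_distinct_conv_sum_set al_distinct)

lemma L_ge: "\<pi> \<in> alignments x y \<Longrightarrow> align_score S x y \<pi> \<le> L_S S x y"
  unfolding L_S_def by (rule Max_ge) (auto simp: al_finite)

lemma L_attained: "\<exists>\<pi>\<in>alignments x y. L_S S x y = align_score S x y \<pi>"
proof -
  have "L_S S x y \<in> align_score S x y ` alignments x y"
    unfolding L_S_def by (rule Max_in) (use al_nil in \<open>auto simp: al_finite\<close>)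
  then show ?thesis by auto
qed

lemma score_bound:
  assumes "\<pi> \<in> alignments x y" and M: "\<And>u v. \<bar>S u v\<bar> \<le> M"
  shows "\<bar>align_score S x y \<pi>\<bar> \<le> M * (2 * length x + length y)"
proof -
  have M0: "M \<ge> 0" using M[of None None] by simp
  have "\<bar>psum S x y \<pi>\<bar> \<le> (\<Sum>(i, j) \<in> set \<pi>. \<bar>S (Some (x ! i)) (Some (y ! j))\<bar>)"
    unfolding psum_def by (rule order_trans[OF sum_abs]) (simp add: case_prod_unfold)
  also have "\<dots> \<le> real (card (set \<pi>)) * M"
    by (rule sum_bounded_above) (auto simp: M)
  also have "card (set \<pi>) = length \<pi>" using al_distinct[OF assms(1)] by (simp add: distinct_card)
  finally have 1: "\<bar>psum S x y \<pi>\<bar> \<le> real (length x) * M"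
    using al_length[OF assms(1)] M0 by (smt (verit) mult_right_mono of_nat_mono)
  have "\<bar>gx S x \<pi>\<bar> \<le> (\<Sum>i \<in> {..<length x} - fst ` set \<pi>. \<bar>S (Some (x ! i)) None\<bar>)"
    unfolding gx_def by (rule sum_abs)
  also have "\<dots> \<le> real (card ({..<length x} - fst ` set \<pi>)) * M"
    by (rule sum_bounded_above) (auto simp: M)
  also have "\<dots> \<le> real (length x) * M"
  proof -
    have "card ({..<length x} - fst ` set \<pi>) \<le> card {..<length x}" by (rule card_mono) auto
    then show ?thesis using M0 by (intro mult_right_mono) auto
  qed
  finally have 2: "\<bar>gx S x \<pi>\<bar> \<le> real (length x) * M" .
  have "\<bar>gy S y \<pi>\<bar> \<le> (\<Sum>j \<in> {..<length y} - snd ` set \<pi>. \<bar>S None (Some (y ! j))\<bar>)"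
    unfolding gy_def by (rule sum_abs)
  also have "\<dots> \<le> real (card ({..<length y} - snd ` set \<pi>)) * M"
    by (rule sum_bounded_above) (auto simp: M)
  also have "\<dots> \<le> real (length y) * M"
  proof -
    have "card ({..<length y} - snd ` set \<pi>) \<le> card {..<length y}" by (rule card_mono) auto
    then show ?thesis using M0 by (intro mult_right_mono) auto
  qed
  finally have 3: "\<bar>gy S y \<pi>\<bar> \<le> real (length y) * M" .
  show ?thesis using 1 2 3 score_eq[OF assms(1)] by (simp add: algebra_simps)
qed

lemma L_bound:
  assumes M: "\<And>u v. \<bar>S u v\<bar> \<le> M"
  shows "\<bar>L_S S x y\<bar> \<le> M * (2 * length x + length y)"
  using L_attained[of x y S] score_bound[OF _ M] by force




lemma gap_split:
  fixes A1 A2 :: "nat set"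
  assumes "A1 \<subseteq> {..<n1}"
  shows "{..<n1+n2} - (A1 \<union> (\<lambda>i. i + n1) ` A2) = ({..<n1} - A1) \<union> (\<lambda>i. i + n1) ` ({..<n2} - A2)"
proof (rule set_eqI)
  fix z
  show "z \<in> {..<n1+n2} - (A1 \<union> (\<lambda>i. i + n1) ` A2) \<longleftrightarrow> z \<in> ({..<n1} - A1) \<union> (\<lambda>i. i + n1) ` ({..<n2} - A2)"
  proof (cases "z < n1")
    case True then show ?thesis using assms by auto
  next
    case False
    then have z: "z = (z - n1) + n1" by simp
    have "z \<in> (\<lambda>i. i + n1) ` B \<longleftrightarrow> z - n1 \<in> B" for B
      using False by (auto simp: image_iff) (metis z)
    then show ?thesis using False assms by auto
  qed
qed

lemma superadd_L:
  "L_S S (x1 @ x2) (y1 @ y2) \<ge> L_S S x1 y1 + L_S S x2 y2"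
proof -
  obtain \<pi>1 where p1: "\<pi>1 \<in> alignments x1 y1" and e1: "L_S S x1 y1 = align_score S x1 y1 \<pi>1"
    using L_attained by blast
  obtain \<pi>2 where p2: "\<pi>2 \<in> alignments x2 y2" and e2: "L_S S x2 y2 = align_score S x2 y2 \<pi>2"
    using L_attained by blast
  define m where "m = length x1"
  define k where "k = length y1"
  define sh where "sh = (\<lambda>(i::nat, j::nat). (i + m, j + k))"
  define \<pi> where "\<pi> = \<pi>1 @ map sh \<pi>2"
  have b1: "\<forall>(i, j) \<in> set \<pi>1. i < m \<and> j < k" using p1 by (simp add: alignments_def m_def k_def)
  have b2: "\<forall>(i, j) \<in> set \<pi>2. i < length x2 \<and> j < length y2" using p2 by (simp add: alignments_def)
  have s1: "sorted_wrt Rel \<pi>1" using p1 by (simp add: alignments_def)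
  have s2: "sorted_wrt Rel \<pi>2" using p2 by (simp add: alignments_def)
  have "sorted_wrt Rel (map sh \<pi>2)"
    unfolding sorted_wrt_map by (rule sorted_wrt_mono_rel[OF _ s2]) (auto simp: sh_def)
  moreover have "\<forall>p\<in>set \<pi>1. \<forall>q\<in>set (map sh \<pi>2). Rel p q"
    using b1 by (auto simp: sh_def)
  ultimately have "sorted_wrt Rel \<pi>" using s1 by (simp add: \<pi>_def sorted_wrt_append)
  moreover have "\<forall>(i, j) \<in> set \<pi>. i < length (x1 @ x2) \<and> j < length (y1 @ y2)"
    using b1 b2 by (auto simp: \<pi>_def sh_def m_def k_def)
  ultimately have p: "\<pi> \<in> alignments (x1 @ x2) (y1 @ y2)" by (simp add: alignments_def)
  have injsh: "inj sh" by (auto simp: sh_def inj_def)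
  have disj: "set \<pi>1 \<inter> sh ` set \<pi>2 = {}" using b1 by (auto simp: sh_def)
  have ps: "psum S (x1 @ x2) (y1 @ y2) \<pi> = psum S x1 y1 \<pi>1 + psum S x2 y2 \<pi>2"
  proof -
    have "psum S (x1 @ x2) (y1 @ y2) \<pi> = (\<Sum>(i, j) \<in> set \<pi>1. S (Some ((x1@x2) ! i)) (Some ((y1@y2) ! j)))
          + (\<Sum>(i, j) \<in> sh ` set \<pi>2. S (Some ((x1@x2) ! i)) (Some ((y1@y2) ! j)))"
      unfolding psum_def \<pi>_def by (simp add: sum.union_disjoint disj)
    also have "(\<Sum>(i, j) \<in> set \<pi>1. S (Some ((x1@x2) ! i)) (Some ((y1@y2) ! j))) = psum S x1 y1 \<pi>1"
      unfolding psum_def using b1 by (intro sum.cong refl) (auto simp: nth_append m_def k_def)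
    also have "(\<Sum>(i, j) \<in> sh ` set \<pi>2. S (Some ((x1@x2) ! i)) (Some ((y1@y2) ! j))) = psum S x2 y2 \<pi>2"
      unfolding psum_def using injsh
      by (subst sum.reindex) (auto simp: inj_on_def sh_def nth_append m_def k_def intro!: sum.cong)
    finally show ?thesis .
  qed
  have fst_eq: "fst ` set \<pi> = fst ` set \<pi>1 \<union> (\<lambda>i. i + m) ` (fst ` set \<pi>2)"
    by (force simp: \<pi>_def sh_def image_iff)
  have snd_eq: "snd ` set \<pi> = snd ` set \<pi>1 \<union> (\<lambda>i. i + k) ` (snd ` set \<pi>2)"
    by (force simp: \<pi>_def sh_def image_iff)
  have gxe: "gx S (x1 @ x2) \<pi> = gx S x1 \<pi>1 + gx S x2 \<pi>2"
  proof -
    have sub: "fst ` set \<pi>1 \<subseteq> {..<m}" using b1 by auto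
    have "gx S (x1 @ x2) \<pi> = (\<Sum>i \<in> ({..<m} - fst ` set \<pi>1) \<union> (\<lambda>i. i + m) ` ({..<length x2} - fst ` set \<pi>2). S (Some ((x1@x2) ! i)) None)"
      unfolding gx_def fst_eq using gap_split[OF sub, of "length x2" "fst ` set \<pi>2"]
      by (simp add: m_def)
    also have "\<dots> = (\<Sum>i \<in> {..<m} - fst ` set \<pi>1. S (Some ((x1@x2) ! i)) None)
       + (\<Sum>i \<in> (\<lambda>i. i + m) ` ({..<length x2} - fst ` set \<pi>2). S (Some ((x1@x2) ! i)) None)"
      by (rule sum.union_disjoint) auto
    also have "(\<Sum>i \<in> {..<m} - fst ` set \<pi>1. S (Some ((x1@x2) ! i)) None) = gx S x1 \<pi>1"
      unfolding gx_def by (intro sum.cong) (auto simp: nth_append m_def)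
    also have "(\<Sum>i \<in> (\<lambda>i. i + m) ` ({..<length x2} - fst ` set \<pi>2). S (Some ((x1@x2) ! i)) None) = gx S x2 \<pi>2"
      unfolding gx_def by (subst sum.reindex) (auto simp: nth_append m_def intro!: sum.cong)
    finally show ?thesis .
  qed
  have gye: "gy S (y1 @ y2) \<pi> = gy S y1 \<pi>1 + gy S y2 \<pi>2"
  proof -
    have sub: "snd ` set \<pi>1 \<subseteq> {..<k}" using b1 by auto
    have "gy S (y1 @ y2) \<pi> = (\<Sum>i \<in> ({..<k} - snd ` set \<pi>1) \<union> (\<lambda>i. i + k) ` ({..<length y2} - snd ` set \<pi>2). S None (Some ((y1@y2) ! i)))"
      unfolding gy_def snd_eq using gap_split[OF sub, of "length y2" "snd ` set \<pi>2"]
      by (simp add: k_def)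
    also have "\<dots> = (\<Sum>i \<in> {..<k} - snd ` set \<pi>1. S None (Some ((y1@y2) ! i)))
       + (\<Sum>i \<in> (\<lambda>i. i + k) ` ({..<length y2} - snd ` set \<pi>2). S None (Some ((y1@y2) ! i)))"
      by (rule sum.union_disjoint) auto
    also have "(\<Sum>i \<in> {..<k} - snd ` set \<pi>1. S None (Some ((y1@y2) ! i))) = gy S y1 \<pi>1"
      unfolding gy_def by (intro sum.cong) (auto simp: nth_append k_def)
    also have "(\<Sum>i \<in> (\<lambda>i. i + k) ` ({..<length y2} - snd ` set \<pi>2). S None (Some ((y1@y2) ! i))) = gy S y2 \<pi>2"
      unfolding gy_def by (subst sum.reindex) (auto simp: nth_append k_def intro!: sum.cong)
    finally show ?thesis .
  qed
  have "align_score S (x1 @ x2) (y1 @ y2) \<pi> = L_S S x1 y1 + L_S S x2 y2"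
    using score_eq[OF p] score_eq[OF p1] score_eq[OF p2] e1 e2 ps gxe gye by simp
  then show ?thesis using L_ge[OF p, of S] by simp
qed




lemma psum_chg_x:
  assumes "\<pi> \<in> alignments x y"
  shows "psum S (x[i:=c]) y \<pi> - psum S x y \<pi> =
    (\<Sum>(i', j) \<in> set \<pi>. if i' = i then S (Some c) (Some (y ! j)) - S (Some (x ! i)) (Some (y ! j)) else 0)"
  unfolding psum_def
  by (subst sum_subtractf[symmetric], rule sum.cong)
     (use assms in \<open>auto simp: alignments_def nth_list_update\<close>)

lemma psum_chg_y:
  assumes "\<pi> \<in> alignments x y"
  shows "psum S x (y[j:=c]) \<pi> - psum S x y \<pi> =
    (\<Sum>(i, j') \<in> set \<pi>. if j' = j then S (Some (x ! i)) (Some c) - S (Some (x ! i)) (Some (y ! j)) else 0)"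
  unfolding psum_def
  by (subst sum_subtractf[symmetric], rule sum.cong)
     (use assms in \<open>auto simp: alignments_def nth_list_update\<close>)

lemma gx_chg:
  assumes "i < length x"
  shows "gx S (x[i:=c]) \<pi> - gx S x \<pi> =
    (if i \<notin> fst ` set \<pi> then S (Some c) None - S (Some (x ! i)) None else 0)"
proof -
  have "gx S (x[i:=c]) \<pi> - gx S x \<pi> = (\<Sum>i' \<in> {..<length x} - fst ` set \<pi>.
      if i' = i then S (Some c) None - S (Some (x ! i)) None else 0)"
    unfolding gx_def length_list_update by (subst sum_subtractf[symmetric], rule sum.cong) (auto simp: nth_list_update)
  also have "\<dots> = (if i \<notin> fst ` set \<pi> then S (Some c) None - S (Some (x ! i)) None else 0)"
    using assms by simp
  finally show ?thesis .
qed

lemma gy_chg: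
  assumes "j < length y"
  shows "gy S (y[j:=c]) \<pi> - gy S y \<pi> =
    (if j \<notin> snd ` set \<pi> then S None (Some c) - S None (Some (y ! j)) else 0)"
proof -
  have "gy S (y[j:=c]) \<pi> - gy S y \<pi> = (\<Sum>j' \<in> {..<length y} - snd ` set \<pi>.
      if j' = j then S None (Some c) - S None (Some (y ! j)) else 0)"
    unfolding gy_def length_list_update by (subst sum_subtractf[symmetric], rule sum.cong) (auto simp: nth_list_update)
  also have "\<dots> = (if j \<notin> snd ` set \<pi> then S None (Some c) - S None (Some (y ! j)) else 0)"
    using assms by simp
  finally show ?thesis .
qed


lemma score_chg_x:
  assumes p: "\<pi> \<in> alignments x y" and i: "i < length x"
  shows "align_score S (x[i:=c]) y \<pi> - align_score S x y \<pi> =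
    (\<Sum>(i', j) \<in> set \<pi>. if i' = i then S (Some c) (Some (y ! j)) - S (Some (x ! i)) (Some (y ! j)) else 0)
    + (if i \<notin> fst ` set \<pi> then S (Some c) None - S (Some (x ! i)) None else 0)"
proof -
  have p': "\<pi> \<in> alignments (x[i:=c]) y" using p al_len[of "x[i:=c]" x y y] by simp
  show ?thesis using score_eq[OF p, of S] score_eq[OF p', of S] psum_chg_x[OF p, of S i c] gx_chg[OF i, of S c \<pi>] by linarith
qed

lemma score_chg_y:
  assumes p: "\<pi> \<in> alignments x y" and j: "j < length y"
  shows "align_score S x (y[j:=c]) \<pi> - align_score S x y \<pi> =
    (\<Sum>(i, j') \<in> set \<pi>. if j' = j then S (Some (x ! i)) (Some c) - S (Some (x ! i)) (Some (y ! j)) else 0)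
    + (if j \<notin> snd ` set \<pi> then S None (Some c) - S None (Some (y ! j)) else 0)"
proof -
  have p': "\<pi> \<in> alignments x (y[j:=c])" using p al_len[of x x "y[j:=c]" y] by simp
  have "gy S (y[j:=c]) \<pi> - gy S y \<pi> = (if j \<notin> snd ` set \<pi> then S None (Some c) - S None (Some (y ! j)) else 0)" by (rule gy_chg[OF j])
  moreover have "gx S x \<pi> = gx S x \<pi>" ..
  ultimately show ?thesis using score_eq[OF p, of S] score_eq[OF p', of S] psum_chg_y[OF p, of S j c] by linarith
qed

lemma swap_delta:
  fixes h :: "'b \<Rightarrow> nat"
  assumes "finite P" "\<forall>p\<in>P. h p < n"
  shows "(\<Sum>i<n. if Q i then (\<Sum>p\<in>P. if h p = i then f p else 0) else (0::real)) =
         (\<Sum>p\<in>P. if Q (h p) then f p else 0)"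
proof -
  have "(\<Sum>i<n. if Q i then (\<Sum>p\<in>P. if h p = i then f p else 0) else (0::real)) =
        (\<Sum>i<n. \<Sum>p\<in>P. if Q i \<and> h p = i then f p else 0)"
    by (intro sum.cong) auto
  also have "\<dots> = (\<Sum>p\<in>P. \<Sum>i<n. if Q i \<and> h p = i then f p else 0)"
    by (rule sum.swap)
  also have "\<dots> = (\<Sum>p\<in>P. if Q (h p) then f p else 0)"
  proof (rule sum.cong[OF refl])
    fix p assume "p \<in> P"
    then have hp: "h p < n" using assms by auto
    have "(\<Sum>i<n. if Q i \<and> h p = i then f p else 0) = (\<Sum>i<n. if h p = i then (if Q (h p) then f p else 0) else 0)"
      by (intro sum.cong) auto
    also have "\<dots> = (if Q (h p) then f p else 0)" using hp by (simp add: sum.delta')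
    finally show "(\<Sum>i<n. if Q i \<and> h p = i then f p else 0) = (if Q (h p) then f p else 0)" .
  qed
  finally show ?thesis .
qed

lemma gap_delta:
  fixes n :: nat
  assumes "G \<subseteq> {..<n}"
  shows "(\<Sum>i<n. if Q i then (if i \<in> G then g i else 0) else (0::real)) = (\<Sum>i\<in>G. if Q i then g i else 0)"
proof -
  have "(\<Sum>i<n. if Q i then (if i \<in> G then g i else 0) else (0::real)) = (\<Sum>i<n. if i \<in> G then (if Q i then g i else 0) else 0)"
    by (intro sum.cong) auto
  also have "\<dots> = (\<Sum>i\<in>{..<n} \<inter> G. if Q i then g i else 0)"
    by (subst sum.inter_restrict) auto
  also have "{..<n} \<inter> G = G" using assms by auto
  finally show ?thesis .
qed

lemma T_pair:
  assumes sym: "\<And>u v. S u v = S v u"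
  shows "T_fun S a b (Some u) (Some v) = (if u = a then S (Some b) (Some v) - S (Some a) (Some v) else 0)
       + (if v = a then S (Some u) (Some b) - S (Some u) (Some a) else 0)"
  unfolding T_fun_def using sym[of "Some u" "Some b"] sym[of "Some u" "Some a"] sym[of "Some a" "Some b"]
  by auto

lemma T_gx: "T_fun S a b (Some u) None = (if u = a then S (Some b) None - S (Some a) None else 0)"
  unfolding T_fun_def by auto

lemma T_gy:
  assumes sym: "\<And>u v. S u v = S v u"
  shows "T_fun S a b None (Some v) = (if v = a then S None (Some b) - S None (Some a) else 0)"
  unfolding T_fun_def using sym[of None "Some b"] sym[of None "Some a"] by auto

lemma T_identity:
  assumes p: "\<pi> \<in> alignments x y" and sym: "\<And>u v. S u v = S v u"
  shows "align_score (T_fun S a b) x y \<pi> =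
     (\<Sum>i<length x. if x ! i = a then align_score S (x[i:=b]) y \<pi> - align_score S x y \<pi> else 0)
   + (\<Sum>j<length y. if y ! j = a then align_score S x (y[j:=b]) \<pi> - align_score S x y \<pi> else 0)"
proof -
  have bnd: "\<forall>(i, j)\<in>set \<pi>. i < length x \<and> j < length y" using p by (simp add: alignments_def)
  have X: "(\<Sum>i<length x. if x ! i = a then align_score S (x[i:=b]) y \<pi> - align_score S x y \<pi> else 0)
    = (\<Sum>p\<in>set \<pi>. if x ! fst p = a then S (Some b) (Some (y ! snd p)) - S (Some a) (Some (y ! snd p)) else 0)
    + (\<Sum>i\<in>{..<length x} - fst ` set \<pi>. if x ! i = a then S (Some b) None - S (Some a) None else 0)"
  proof -
    have "(\<Sum>i<length x. if x ! i = a then align_score S (x[i:=b]) y \<pi> - align_score S x y \<pi> else 0)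
      = (\<Sum>i<length x. if x ! i = a then (\<Sum>p\<in>set \<pi>. if fst p = i then S (Some b) (Some (y ! snd p)) - S (Some a) (Some (y ! snd p)) else 0) else 0)
      + (\<Sum>i<length x. if x ! i = a then (if i \<in> {..<length x} - fst ` set \<pi> then S (Some b) None - S (Some a) None else 0) else 0)"
      by (subst sum.distrib[symmetric], rule sum.cong[OF refl])
         (auto simp: score_chg_x[OF p] case_prod_unfold intro!: sum.cong)
    also have "\<dots> = (\<Sum>p\<in>set \<pi>. if x ! fst p = a then S (Some b) (Some (y ! snd p)) - S (Some a) (Some (y ! snd p)) else 0)
    + (\<Sum>i\<in>{..<length x} - fst ` set \<pi>. if x ! i = a then S (Some b) None - S (Some a) None else 0)"
      by (subst swap_delta, simp, use bnd in force, subst gap_delta) auto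
    finally show ?thesis .
  qed
  have Y: "(\<Sum>j<length y. if y ! j = a then align_score S x (y[j:=b]) \<pi> - align_score S x y \<pi> else 0)
    = (\<Sum>p\<in>set \<pi>. if y ! snd p = a then S (Some (x ! fst p)) (Some b) - S (Some (x ! fst p)) (Some a) else 0)
    + (\<Sum>j\<in>{..<length y} - snd ` set \<pi>. if y ! j = a then S None (Some b) - S None (Some a) else 0)"
  proof -
    have "(\<Sum>j<length y. if y ! j = a then align_score S x (y[j:=b]) \<pi> - align_score S x y \<pi> else 0)
      = (\<Sum>j<length y. if y ! j = a then (\<Sum>p\<in>set \<pi>. if snd p = j then S (Some (x ! fst p)) (Some b) - S (Some (x ! fst p)) (Some a) else 0) else 0)
      + (\<Sum>j<length y. if y ! j = a then (if j \<in> {..<length y} - snd ` set \<pi> then S None (Some b) - S None (Some a) else 0) else 0)"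
      by (subst sum.distrib[symmetric], rule sum.cong[OF refl])
         (auto simp: score_chg_y[OF p] case_prod_unfold intro!: sum.cong)
    also have "\<dots> = (\<Sum>p\<in>set \<pi>. if y ! snd p = a then S (Some (x ! fst p)) (Some b) - S (Some (x ! fst p)) (Some a) else 0)
    + (\<Sum>j\<in>{..<length y} - snd ` set \<pi>. if y ! j = a then S None (Some b) - S None (Some a) else 0)"
      by (subst swap_delta, simp, use bnd in force, subst gap_delta) auto
    finally show ?thesis .
  qed
  have P: "psum (T_fun S a b) x y \<pi> =
      (\<Sum>p\<in>set \<pi>. if x ! fst p = a then S (Some b) (Some (y ! snd p)) - S (Some a) (Some (y ! snd p)) else 0)
    + (\<Sum>p\<in>set \<pi>. if y ! snd p = a then S (Some (x ! fst p)) (Some b) - S (Some (x ! fst p)) (Some a) else 0)"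
    unfolding psum_def by (subst sum.distrib[symmetric]) (simp add: T_pair[OF sym] case_prod_unfold)
  have GX: "gx (T_fun S a b) x \<pi> = (\<Sum>i\<in>{..<length x} - fst ` set \<pi>. if x ! i = a then S (Some b) None - S (Some a) None else 0)"
    unfolding gx_def by (simp add: T_gx)
  have GY: "gy (T_fun S a b) y \<pi> = (\<Sum>j\<in>{..<length y} - snd ` set \<pi>. if y ! j = a then S None (Some b) - S None (Some a) else 0)"
    unfolding gy_def by (simp add: T_gy[OF sym])
  show ?thesis using score_eq[OF p] X Y P GX GY by simp
qed

lemma score_lin:
  "align_score (\<lambda>u v. S u v - e * T u v) x y \<pi> = align_score S x y \<pi> - e * align_score T x y \<pi>"
  unfolding align_score_def
  by (simp add: sum_list_subtractf sum_subtractf sum_list_const_mult sum_distrib_left case_prod_unfold algebra_simps)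




abbreviation EE :: "'b pmf \<Rightarrow> ('b \<Rightarrow> real) \<Rightarrow> real" where
  "EE M f \<equiv> measure_pmf.expectation M f"

lemma E_sum: "finite (set_pmf M) \<Longrightarrow> EE M f = (\<Sum>a\<in>set_pmf M. pmf M a * f a)"
  by (subst integral_measure_pmf[of "set_pmf M"]) auto

lemma E_cong: "(\<And>x. x \<in> set_pmf M \<Longrightarrow> f x = g x) \<Longrightarrow> EE M f = EE M g"
  by (rule integral_cong_AE) (auto simp: AE_measure_pmf_iff)

lemma E_const: "finite (set_pmf M) \<Longrightarrow> EE M (\<lambda>_. c) = c"
  by (simp add: E_sum sum_distrib_right[symmetric] sum_pmf_eq_1)

lemma E_add: "finite (set_pmf M) \<Longrightarrow> EE M (\<lambda>x. f x + g x) = EE M f + EE M g"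
  by (simp add: E_sum sum.distrib algebra_simps)

lemma E_diff: "finite (set_pmf M) \<Longrightarrow> EE M (\<lambda>x. f x - g x) = EE M f - EE M g"
  by (simp add: E_sum sum_subtractf algebra_simps)

lemma E_cmult: "finite (set_pmf M) \<Longrightarrow> EE M (\<lambda>x. c * f x) = c * EE M f"
  by (simp add: E_sum sum_distrib_left algebra_simps)

lemma E_sumI: "finite (set_pmf M) \<Longrightarrow> EE M (\<lambda>x. \<Sum>i\<in>I. f i x) = (\<Sum>i\<in>I. EE M (f i))"
  by (simp add: E_sum sum_distrib_left sum.swap[of _ I])

lemma E_mono: "finite (set_pmf M) \<Longrightarrow> (\<And>x. x \<in> set_pmf M \<Longrightarrow> f x \<le> g x) \<Longrightarrow> EE M f \<le> EE M g"
  by (simp add: E_sum sum_mono mult_left_mono)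

lemma E_nonneg: "finite (set_pmf M) \<Longrightarrow> (\<And>x. x \<in> set_pmf M \<Longrightarrow> 0 \<le> f x) \<Longrightarrow> 0 \<le> EE M f"
  using E_mono[of M "\<lambda>_. 0" f] E_const[of M 0] by simp

lemma E_abs: "finite (set_pmf M) \<Longrightarrow> \<bar>EE M f\<bar> \<le> EE M (\<lambda>x. \<bar>f x\<bar>)"
  unfolding E_sum by (rule order_trans[OF sum_abs]) (simp add: abs_mult)

lemma E_abs_bound: "finite (set_pmf M) \<Longrightarrow> (\<And>x. x \<in> set_pmf M \<Longrightarrow> \<bar>f x\<bar> \<le> K) \<Longrightarrow> \<bar>EE M f\<bar> \<le> K"
proof -
  assume a: "finite (set_pmf M)" "\<And>x. x \<in> set_pmf M \<Longrightarrow> \<bar>f x\<bar> \<le> K"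
  have "EE M (\<lambda>x. \<bar>f x\<bar>) \<le> EE M (\<lambda>_. K)" by (rule E_mono) (use a in auto)
  then show ?thesis using E_abs[OF a(1), of f] E_const[OF a(1), of K] by linarith
qed

lemma E_bind:
  assumes "finite (set_pmf M)" "\<And>x. x \<in> set_pmf M \<Longrightarrow> finite (set_pmf (N x))"
  shows "EE (bind_pmf M N) f = EE M (\<lambda>x. EE (N x) f)"
  using pmf_expectation_bind[of "set_pmf M" N M f] assms by (simp add: E_sum)

lemma E_swap:
  assumes "finite (set_pmf A)" "finite (set_pmf B)"
  shows "EE A (\<lambda>a. EE B (\<lambda>b. h a b)) = EE B (\<lambda>b. EE A (\<lambda>a. h a b))"
  using assms by (simp add: E_sum sum_distrib_left sum.swap[of _ "set_pmf A"] algebra_simps)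

lemma E_pair:
  assumes "finite (set_pmf A)" "finite (set_pmf B)"
  shows "EE (pair_pmf A B) h = EE A (\<lambda>a. EE B (\<lambda>b. h (a, b)))"
  using assms unfolding pair_pmf_def by (simp add: E_bind)

lemma fin_rep: "finite (set_pmf (replicate_pmf n (p :: 'a::finite pmf)))"
proof -
  have "set_pmf (replicate_pmf n p) \<subseteq> {xs. set xs \<subseteq> UNIV \<and> length xs = n}"
    by (auto simp: set_replicate_pmf)
  then show ?thesis by (rule finite_subset) (rule finite_lists_length_eq, simp)
qed

lemma fin_p: "finite (set_pmf (p :: 'a::finite pmf))" by simp

lemma len_rep: "z \<in> set_pmf (replicate_pmf n p) \<Longrightarrow> length z = n"
  by (simp add: set_replicate_pmf)

lemma E_rep_Suc:
  "EE (replicate_pmf (Suc n) (p :: 'a::finite pmf)) h = EE p (\<lambda>x. EE (replicate_pmf n p) (\<lambda>xs. h (x # xs)))"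
  by (simp add: E_bind fin_rep)

lemma E_rep_add:
  "EE (replicate_pmf (m + n) (p :: 'a::finite pmf)) h =
     EE (replicate_pmf m p) (\<lambda>xs. EE (replicate_pmf n p) (\<lambda>ys. h (xs @ ys)))"
  by (simp add: replicate_pmf_distrib E_bind fin_rep)

lemma var_decomp:
  assumes "finite (set_pmf M)"
  shows "EE M (\<lambda>x. (f x - c)\<^sup>2) = EE M (\<lambda>x. (f x - EE M f)\<^sup>2) + (EE M f - c)\<^sup>2"
proof -
  define g where "g = EE M f"
  have "EE M (\<lambda>x. (f x - c)\<^sup>2) = EE M (\<lambda>x. (f x - g)\<^sup>2 + (2 * (g - c)) * (f x - g) + (g - c)\<^sup>2)"
    by (rule E_cong) (simp add: power2_eq_square algebra_simps)
  also have "\<dots> = EE M (\<lambda>x. (f x - g)\<^sup>2) + (2 * (g - c)) * (EE M f - g) + (g - c)\<^sup>2"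
    using assms by (simp add: E_add E_cmult E_diff E_const)
  finally show ?thesis by (simp add: g_def)
qed

lemma var_le_K:
  assumes "finite (set_pmf M)" and K: "\<And>x x'. x \<in> set_pmf M \<Longrightarrow> x' \<in> set_pmf M \<Longrightarrow> \<bar>f x - f x'\<bar> \<le> K"
  shows "EE M (\<lambda>x. (f x - EE M f)\<^sup>2) \<le> K\<^sup>2"
proof -
  obtain x0 where x0: "x0 \<in> set_pmf M" using set_pmf_not_empty[of M] by blast
  have "EE M (\<lambda>x. (f x - EE M f)\<^sup>2) \<le> EE M (\<lambda>x. (f x - f x0)\<^sup>2)"
    using var_decomp[OF assms(1), of f "f x0"] by simp
  also have "\<dots> \<le> EE M (\<lambda>_. K\<^sup>2)"
  proof (rule E_mono[OF assms(1)])
    fix x assume "x \<in> set_pmf M"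
    then have "\<bar>f x - f x0\<bar> \<le> K" using K x0 by blast
    then show "(f x - f x0)\<^sup>2 \<le> K\<^sup>2"
      by (metis abs_ge_zero order_trans power2_abs power_mono)
  qed
  also have "\<dots> = K\<^sup>2" using assms(1) by (rule E_const)
  finally show ?thesis .
qed

lemma efron_stein:
  fixes p :: "'a::finite pmf" and f :: "'a list \<Rightarrow> real"
  assumes "\<And>z i c. length z = n \<Longrightarrow> i < n \<Longrightarrow> \<bar>f (z[i:=c]) - f z\<bar> \<le> K"
  shows "EE (replicate_pmf n p) (\<lambda>z. (f z - EE (replicate_pmf n p) f)\<^sup>2) \<le> real n * K\<^sup>2"
  using assms
proof (induction n arbitrary: f)
  case 0
  then show ?case by simp
next
  case (Suc n)
  define g where "g = (\<lambda>xs. EE p (\<lambda>x. f (x # xs)))"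
  define \<mu> where "\<mu> = EE (replicate_pmf (Suc n) p) f"
  have mu: "\<mu> = EE (replicate_pmf n p) g"
    unfolding \<mu>_def g_def E_rep_Suc by (rule E_swap) (simp_all add: fin_rep)
  have "EE (replicate_pmf (Suc n) p) (\<lambda>z. (f z - \<mu>)\<^sup>2)
      = EE (replicate_pmf n p) (\<lambda>xs. EE p (\<lambda>x. (f (x # xs) - \<mu>)\<^sup>2))"
    unfolding E_rep_Suc by (rule E_swap) (simp_all add: fin_rep)
  also have "\<dots> \<le> EE (replicate_pmf n p) (\<lambda>xs. K\<^sup>2 + (g xs - \<mu>)\<^sup>2)"
  proof (rule E_mono[OF fin_rep])
    fix xs assume xs: "xs \<in> set_pmf (replicate_pmf n p)"
    have "EE p (\<lambda>x. (f (x # xs) - \<mu>)\<^sup>2) = EE p (\<lambda>x. (f (x # xs) - g xs)\<^sup>2) + (g xs - \<mu>)\<^sup>2"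
      unfolding g_def by (rule var_decomp) simp
    moreover have "EE p (\<lambda>x. (f (x # xs) - g xs)\<^sup>2) \<le> K\<^sup>2"
      unfolding g_def
    proof (rule var_le_K)
      fix x x' :: 'a
      have "\<bar>f ((x' # xs)[0 := x]) - f (x' # xs)\<bar> \<le> K"
        by (rule Suc.prems) (use len_rep[OF xs] in auto)
      then show "\<bar>f (x # xs) - f (x' # xs)\<bar> \<le> K" by simp
    qed simp
    ultimately show "EE p (\<lambda>x. (f (x # xs) - \<mu>)\<^sup>2) \<le> K\<^sup>2 + (g xs - \<mu>)\<^sup>2" by simp
  qed
  also have "\<dots> = K\<^sup>2 + EE (replicate_pmf n p) (\<lambda>xs. (g xs - \<mu>)\<^sup>2)"
    by (simp add: E_add E_const fin_rep)
  also have "EE (replicate_pmf n p) (\<lambda>xs. (g xs - \<mu>)\<^sup>2) \<le> real n * K\<^sup>2"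
    unfolding mu
  proof (rule Suc.IH)
    fix z :: "'a list" and i and c :: 'a assume z: "length z = n" and i: "i < n"
    have "g (z[i:=c]) - g z = EE p (\<lambda>x. f ((x # z)[Suc i := c]) - f (x # z))"
      unfolding g_def by (simp add: E_diff)
    also have "\<bar>\<dots>\<bar> \<le> K"
    proof (rule E_abs_bound)
      fix x
      show "\<bar>f ((x # z)[Suc i := c]) - f (x # z)\<bar> \<le> K"
        by (rule Suc.prems) (use z i in auto)
    qed simp
    finally show "\<bar>g (z[i:=c]) - g z\<bar> \<le> K" .
  qed
  finally show ?case unfolding \<mu>_def by (simp add: algebra_simps)
qed

lemma resample:
  fixes p :: "'a::finite pmf"
  assumes "i < n"
  shows "EE (replicate_pmf n p) (\<lambda>z. EE p (\<lambda>c. h (z[i:=c]))) = EE (replicate_pmf n p) h"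
  using assms
proof (induction n arbitrary: i h)
  case 0 then show ?case by simp
next
  case (Suc n)
  show ?case
  proof (cases i)
    case 0
    have "EE (replicate_pmf (Suc n) p) (\<lambda>z. EE p (\<lambda>c. h (z[i:=c])))
        = EE p (\<lambda>x. EE (replicate_pmf n p) (\<lambda>xs. EE p (\<lambda>c. h (c # xs))))"
      unfolding E_rep_Suc 0 by simp
    also have "\<dots> = EE (replicate_pmf n p) (\<lambda>xs. EE p (\<lambda>c. h (c # xs)))"
      by (rule E_const) simp
    also have "\<dots> = EE p (\<lambda>c. EE (replicate_pmf n p) (\<lambda>xs. h (c # xs)))"
      by (rule E_swap) (simp_all add: fin_rep)
    finally show ?thesis unfolding E_rep_Suc .
  next
    case (Suc j)
    with Suc.prems have j: "j < n" by simp
    have "EE (replicate_pmf (Suc n) p) (\<lambda>z. EE p (\<lambda>c. h (z[i:=c])))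
        = EE p (\<lambda>x. EE (replicate_pmf n p) (\<lambda>xs. EE p (\<lambda>c. h (x # xs[j:=c]))))"
      unfolding E_rep_Suc Suc by simp
    also have "\<dots> = EE p (\<lambda>x. EE (replicate_pmf n p) (\<lambda>xs. h (x # xs)))"
    proof -
      have "\<And>x. EE (replicate_pmf n p) (\<lambda>xs. EE p (\<lambda>c. h (x # xs[j:=c]))) = EE (replicate_pmf n p) (\<lambda>xs. h (x # xs))"
        subgoal for x using Suc.IH[OF j, of "\<lambda>xs. h (x # xs)"] by simp
        done
      then show ?thesis by simp
    qed
    finally show ?thesis unfolding E_rep_Suc .
  qed
qed




lemma sum_split2: "(\<Sum>i<m+k. f i) = (\<Sum>i<m. f i) + (\<Sum>j<k. f (m + j :: nat) :: real)"
  by (induction k) (simp_all add: algebra_simps)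

lemma bound_exists: "\<exists>M. \<forall>u v. \<bar>(S :: 'a::finite option \<Rightarrow> 'a option \<Rightarrow> real) u v\<bar> \<le> M"
proof -
  define M where "M = Max ((\<lambda>(u, v). \<bar>S u v\<bar>) ` UNIV)"
  have "\<bar>S u v\<bar> \<le> M" for u v
    unfolding M_def by (rule Max_ge) (auto intro!: image_eqI[of _ _ "(u, v)"])
  then show ?thesis by blast
qed

lemma diff2:
  assumes M: "\<And>u v. \<bar>S u v\<bar> \<le> M"
  shows "\<bar>S u v - S u' v'\<bar> \<le> 2 * (M::real)"
  using abs_triangle_ineq4[of "S u v" "S u' v'"] M[of u v] M[of u' v'] by linarith

lemma one_term:
  assumes "distinct (map fst \<pi>)" "\<And>q. \<bar>d q\<bar> \<le> B"
  shows "\<bar>\<Sum>q\<in>set \<pi>. if fst q = i then d q else (0::real)\<bar> \<le> B"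
proof -
  have B0: "B \<ge> 0" using assms(2)[of undefined] by simp
  have "(\<Sum>q\<in>set \<pi>. if fst q = i then d q else 0) = (\<Sum>q\<in>set \<pi> \<inter> {q. fst q = i}. d q)"
    by (subst sum.inter_restrict) auto
  also have "\<bar>\<dots>\<bar> \<le> (\<Sum>q\<in>set \<pi> \<inter> {q. fst q = i}. \<bar>d q\<bar>)" by (rule sum_abs)
  also have "\<dots> \<le> real (card (set \<pi> \<inter> {q. fst q = i})) * B"
    by (rule sum_bounded_above) (use assms in auto)
  also have "card (set \<pi> \<inter> {q. fst q = i}) \<le> card {i}"
  proof (rule card_inj_on_le[of fst])
    show "inj_on fst (set \<pi> \<inter> {q. fst q = i})"
      using assms(1) by (auto simp: distinct_map inj_on_def)
  qed auto
  then have "real (card (set \<pi> \<inter> {q. fst q = i})) * B \<le> 1 * B" using B0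
    by (intro mult_right_mono) auto
  finally show ?thesis by simp
qed

lemma one_term_snd:
  assumes "distinct (map snd \<pi>)" "\<And>q. \<bar>d q\<bar> \<le> B"
  shows "\<bar>\<Sum>q\<in>set \<pi>. if snd q = i then d q else (0::real)\<bar> \<le> B"
proof -
  have B0: "B \<ge> 0" using assms(2)[of undefined] by simp
  have "(\<Sum>q\<in>set \<pi>. if snd q = i then d q else 0) = (\<Sum>q\<in>set \<pi> \<inter> {q. snd q = i}. d q)"
    by (subst sum.inter_restrict) auto
  also have "\<bar>\<dots>\<bar> \<le> (\<Sum>q\<in>set \<pi> \<inter> {q. snd q = i}. \<bar>d q\<bar>)" by (rule sum_abs)
  also have "\<dots> \<le> real (card (set \<pi> \<inter> {q. snd q = i})) * B"
    by (rule sum_bounded_above) (use assms in auto)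
  also have "card (set \<pi> \<inter> {q. snd q = i}) \<le> card {i}"
  proof (rule card_inj_on_le[of snd])
    show "inj_on snd (set \<pi> \<inter> {q. snd q = i})"
      using assms(1) by (auto simp: distinct_map inj_on_def)
  qed auto
  then have "real (card (set \<pi> \<inter> {q. snd q = i})) * B \<le> 1 * B" using B0
    by (intro mult_right_mono) auto
  finally show ?thesis by simp
qed

lemma score_diff_x:
  assumes p: "\<pi> \<in> alignments x y" and i: "i < length x" and M: "\<And>u v. \<bar>S u v\<bar> \<le> M"
  shows "align_score S (x[i:=c]) y \<pi> - align_score S x y \<pi> \<le> 4 * M"
proof -
  have 1: "\<bar>\<Sum>q\<in>set \<pi>. if fst q = i then S (Some c) (Some (y ! snd q)) - S (Some (x ! i)) (Some (y ! snd q)) else 0\<bar> \<le> 2 * M"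
    by (rule one_term[OF al_distinct_fst[OF p]]) (rule diff2[OF M])
  have 2: "\<bar>if i \<notin> fst ` set \<pi> then S (Some c) None - S (Some (x ! i)) None else 0\<bar> \<le> 2 * M"
    using M[of "Some c" None] M[of "Some (x!i)" None] M[of None None] by auto
  show ?thesis using score_chg_x[OF p i, of S c] 1 2 by (simp add: case_prod_unfold)
qed

lemma score_diff_y:
  assumes p: "\<pi> \<in> alignments x y" and j: "j < length y" and M: "\<And>u v. \<bar>S u v\<bar> \<le> M"
  shows "align_score S x (y[j:=c]) \<pi> - align_score S x y \<pi> \<le> 4 * M"
proof -
  have 1: "\<bar>\<Sum>q\<in>set \<pi>. if snd q = j then S (Some (x ! fst q)) (Some c) - S (Some (x ! fst q)) (Some (y ! j)) else 0\<bar> \<le> 2 * M"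
    by (rule one_term_snd[OF al_distinct_snd[OF p]]) (rule diff2[OF M])
  have 2: "\<bar>if j \<notin> snd ` set \<pi> then S None (Some c) - S None (Some (y ! j)) else 0\<bar> \<le> 2 * M"
    using M[of None "Some c"] M[of None "Some (y!j)"] M[of None None] by auto
  show ?thesis using score_chg_y[OF p j, of S c] 1 2 by (simp add: case_prod_unfold)
qed

lemma L_up_x:
  assumes i: "i < length x" and M: "\<And>u v. \<bar>S u v\<bar> \<le> M"
  shows "L_S S (x[i:=c]) y \<le> L_S S x y + 4 * M"
proof -
  obtain \<pi> where p: "\<pi> \<in> alignments (x[i:=c]) y" and e: "L_S S (x[i:=c]) y = align_score S (x[i:=c]) y \<pi>"
    using L_attained by blast
  have p': "\<pi> \<in> alignments x y" using p al_len[of x "x[i:=c]" y y] by simp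
  show ?thesis using e score_diff_x[where S=S and c=c, OF p' i M] L_ge[OF p', of S] by linarith
qed

lemma L_up_y:
  assumes j: "j < length y" and M: "\<And>u v. \<bar>S u v\<bar> \<le> M"
  shows "L_S S x (y[j:=c]) \<le> L_S S x y + 4 * M"
proof -
  obtain \<pi> where p: "\<pi> \<in> alignments x (y[j:=c])" and e: "L_S S x (y[j:=c]) = align_score S x (y[j:=c]) \<pi>"
    using L_attained by blast
  have p': "\<pi> \<in> alignments x y" using p al_len[of x x y "y[j:=c]"] by simp
  show ?thesis using e score_diff_y[where S=S and c=c, OF p' j M] L_ge[OF p', of S] by linarith
qed

lemma L_diff_x:
  assumes i: "i < length x" and M: "\<And>u v. \<bar>S u v\<bar> \<le> M"
  shows "\<bar>L_S S (x[i:=c]) y - L_S S x y\<bar> \<le> 4 * M"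
proof -
  have "L_S S x y = L_S S ((x[i:=c])[i := x ! i]) y" by simp
  also have "\<dots> \<le> L_S S (x[i:=c]) y + 4 * M" by (rule L_up_x) (use i M in auto)
  finally show ?thesis using L_up_x[where S=S and c=c and y=y, OF i M] by linarith
qed

lemma L_diff_y:
  assumes j: "j < length y" and M: "\<And>u v. \<bar>S u v\<bar> \<le> M"
  shows "\<bar>L_S S x (y[j:=c]) - L_S S x y\<bar> \<le> 4 * M"
proof -
  have "L_S S x y = L_S S x ((y[j:=c])[j := y ! j])" by simp
  also have "\<dots> \<le> L_S S x (y[j:=c]) + 4 * M" by (rule L_up_y) (use j M in auto)
  finally show ?thesis using L_up_y[where S=S and c=c and x=x, OF j M] by linarith
qed

definition FF :: "('a option \<Rightarrow> 'a option \<Rightarrow> real) \<Rightarrow> nat \<Rightarrow> 'a list \<Rightarrow> real" where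
  "FF S n z = L_S S (take n z) (drop n z)"

lemma FF_diff:
  assumes "length z = n + n" "i < n + n" and M: "\<And>u v. \<bar>S u v\<bar> \<le> M"
  shows "\<bar>FF S n (z[i:=c]) - FF S n z\<bar> \<le> 4 * M"
proof (cases "i < n")
  case True
  then show ?thesis unfolding FF_def
    using L_diff_x[of i "take n z" S M c "drop n z"] assms by (simp add: take_update_swap)
next
  case False
  then show ?thesis unfolding FF_def
    using L_diff_y[of "i - n" "drop n z" S M "take n z" c] assms by (simp add: drop_update_swap)
qed




lemma XY_rep:
  fixes p :: "'a::finite pmf"
  shows "EE (XY_pmf p n) h = EE (replicate_pmf (n+n) p) (\<lambda>z. h (take n z, drop n z))"
proof -
  have "EE (XY_pmf p n) h = EE (replicate_pmf n p) (\<lambda>x. EE (replicate_pmf n p) (\<lambda>y. h (x, y)))"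
    unfolding XY_pmf_def by (rule E_pair) (simp_all add: fin_rep)
  also have "\<dots> = EE (replicate_pmf n p) (\<lambda>x. EE (replicate_pmf n p) (\<lambda>y. h (take n (x @ y), drop n (x @ y))))"
    by (intro E_cong) (simp add: len_rep)
  also have "\<dots> = EE (replicate_pmf (n+n) p) (\<lambda>z. h (take n z, drop n z))"
    by (simp add: E_rep_add)
  finally show ?thesis .
qed

lemma mean_FF: "Ln_mean (p::'a::finite pmf) S n = EE (replicate_pmf (n+n) p) (FF S n)"
  unfolding Ln_mean_def by (subst XY_rep) (simp add: FF_def[abs_def])

lemma var_FF: "Ln_var (p::'a::finite pmf) S n =
   EE (replicate_pmf (n+n) p) (\<lambda>z. (FF S n z - EE (replicate_pmf (n+n) p) (FF S n))\<^sup>2)"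
  unfolding Ln_var_def by (subst XY_rep, subst XY_rep) (simp add: FF_def[abs_def])

lemma mean_pair: "Ln_mean (p::'a::finite pmf) S k = EE (replicate_pmf k p) (\<lambda>x. EE (replicate_pmf k p) (\<lambda>y. L_S S x y))"
  unfolding Ln_mean_def XY_pmf_def by (subst E_pair) (simp_all add: fin_rep)

lemma mean_superadd:
  fixes p :: "'a::finite pmf"
  shows "Ln_mean p S (m + n) \<ge> Ln_mean p S m + Ln_mean p S n"
proof -
  let ?R = "\<lambda>k. replicate_pmf k p"
  have inner: "EE (?R m) (\<lambda>y1. EE (?R n) (\<lambda>y2. L_S S (x1 @ x2) (y1 @ y2)))
     \<ge> EE (?R m) (\<lambda>y1. L_S S x1 y1) + EE (?R n) (\<lambda>y2. L_S S x2 y2)" for x1 x2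
  proof -
    have "EE (?R m) (\<lambda>y1. EE (?R n) (\<lambda>y2. L_S S (x1 @ x2) (y1 @ y2)))
      \<ge> EE (?R m) (\<lambda>y1. EE (?R n) (\<lambda>y2. L_S S x1 y1 + L_S S x2 y2))"
      by (intro E_mono fin_rep superadd_L)
    also have "EE (?R m) (\<lambda>y1. EE (?R n) (\<lambda>y2. L_S S x1 y1 + L_S S x2 y2))
      = EE (?R m) (\<lambda>y1. L_S S x1 y1) + EE (?R n) (\<lambda>y2. L_S S x2 y2)"
      by (simp add: E_add E_const fin_rep)
    finally show ?thesis .
  qed
  have "Ln_mean p S (m + n) = EE (?R m) (\<lambda>x1. EE (?R n) (\<lambda>x2.
      EE (?R m) (\<lambda>y1. EE (?R n) (\<lambda>y2. L_S S (x1 @ x2) (y1 @ y2)))))"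
    unfolding mean_pair E_rep_add ..
  also have "\<dots> \<ge> EE (?R m) (\<lambda>x1. EE (?R n) (\<lambda>x2.
      EE (?R m) (\<lambda>y1. L_S S x1 y1) + EE (?R n) (\<lambda>y2. L_S S x2 y2)))"
    by (intro E_mono fin_rep inner)
  also have "EE (?R m) (\<lambda>x1. EE (?R n) (\<lambda>x2.
      EE (?R m) (\<lambda>y1. L_S S x1 y1) + EE (?R n) (\<lambda>y2. L_S S x2 y2)))
     = Ln_mean p S m + Ln_mean p S n"
    unfolding mean_pair by (simp add: E_add E_const fin_rep)
  finally show ?thesis .
qed

lemma mean_bound:
  fixes p :: "'a::finite pmf"
  assumes M: "\<And>u v. \<bar>S u v\<bar> \<le> M"
  shows "\<bar>Ln_mean p S n\<bar> \<le> (3 * M) * real n"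
  unfolding mean_pair
proof (rule E_abs_bound[OF fin_rep])
  fix x assume x: "x \<in> set_pmf (replicate_pmf n p)"
  show "\<bar>EE (replicate_pmf n p) (L_S S x)\<bar> \<le> 3 * M * real n"
  proof (rule E_abs_bound[OF fin_rep])
    fix y assume y: "y \<in> set_pmf (replicate_pmf n p)"
    show "\<bar>L_S S x y\<bar> \<le> 3 * M * real n"
      using L_bound[where S=S and x=x and y=y, OF M] len_rep[OF x] len_rep[OF y] by simp
  qed
qed

lemma lambda_conv:
  fixes p :: "'a::finite pmf"
  shows "lambda_n p S \<longlonglongrightarrow> lambda p S"
proof -
  obtain M where M: "\<And>u v. \<bar>S u v\<bar> \<le> M" using bound_exists[of S] by blast
  have "convergent (\<lambda>n. Ln_mean p S n / real n)"
    by (rule fekete[of _ "3 * M"]) (use mean_superadd mean_bound[OF M] in auto)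
  then show ?thesis unfolding lambda_def lambda_n_def[abs_def] by (simp add: convergent_LIMSEQ_iff)
qed




lemma R_bound:
  fixes S :: "'a option \<Rightarrow> 'a option \<Rightarrow> real"
  assumes sym: "\<And>u v. S u v = S v u" and e: "\<epsilon> > 0" and z: "length z = n + n"
  shows "(\<Sum>i<n+n. if z ! i = a then FF S n (z[i:=b]) - FF S n z else 0)
     \<ge> (FF S n z - FF (\<lambda>u v. S u v - \<epsilon> * T_fun S a b u v) n z) / \<epsilon>"
proof -
  define x where "x = take n z"
  define y where "y = drop n z"
  have lx: "length x = n" and ly: "length y = n" using z by (simp_all add: x_def y_def)
  obtain \<pi> where p: "\<pi> \<in> alignments x y" and e1: "L_S S x y = align_score S x y \<pi>"
    using L_attained by blast
  have F: "FF S n z = L_S S x y" by (simp add: FF_def x_def y_def)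
  have A: "(\<Sum>i<n. if z ! i = a then FF S n (z[i:=b]) - FF S n z else 0)
      \<ge> (\<Sum>i<length x. if x ! i = a then align_score S (x[i:=b]) y \<pi> - align_score S x y \<pi> else 0)"
    unfolding lx
  proof (rule sum_mono)
    fix i assume i: "i \<in> {..<n}"
    have zi: "z ! i = x ! i" using i by (simp add: x_def)
    have "FF S n (z[i:=b]) = L_S S (x[i:=b]) y"
      using i by (simp add: FF_def x_def y_def take_update_swap)
    moreover have "align_score S (x[i:=b]) y \<pi> \<le> L_S S (x[i:=b]) y"
      by (rule L_ge) (use p al_len[of "x[i:=b]" x y y] in simp)
    ultimately show "(if x ! i = a then align_score S (x[i:=b]) y \<pi> - align_score S x y \<pi> else 0)
       \<le> (if z ! i = a then FF S n (z[i:=b]) - FF S n z else 0)"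
      using zi F e1 by auto
  qed
  have B: "(\<Sum>j<n. if z ! (n + j) = a then FF S n (z[n + j:=b]) - FF S n z else 0)
      \<ge> (\<Sum>j<length y. if y ! j = a then align_score S x (y[j:=b]) \<pi> - align_score S x y \<pi> else 0)"
    unfolding ly
  proof (rule sum_mono)
    fix j assume j: "j \<in> {..<n}"
    have zj: "z ! (n + j) = y ! j" using j z by (simp add: y_def)
    have "FF S n (z[n + j:=b]) = L_S S x (y[j:=b])"
      using j by (simp add: FF_def x_def y_def drop_update_swap)
    moreover have "align_score S x (y[j:=b]) \<pi> \<le> L_S S x (y[j:=b])"
      by (rule L_ge) (use p al_len[of x x "y[j:=b]" y] in simp)
    ultimately show "(if y ! j = a then align_score S x (y[j:=b]) \<pi> - align_score S x y \<pi> else 0)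
       \<le> (if z ! (n + j) = a then FF S n (z[n + j:=b]) - FF S n z else 0)"
      using zj F e1 by auto
  qed
  have TI: "align_score (T_fun S a b) x y \<pi> \<le> (\<Sum>i<n+n. if z ! i = a then FF S n (z[i:=b]) - FF S n z else 0)"
    using T_identity[where S=S and a=a and b=b, OF p sym] A B sum_split2[of "\<lambda>i. if z ! i = a then FF S n (z[i:=b]) - FF S n z else 0" n n]
    by linarith
  have "FF (\<lambda>u v. S u v - \<epsilon> * T_fun S a b u v) n z \<ge> align_score (\<lambda>u v. S u v - \<epsilon> * T_fun S a b u v) x y \<pi>"
    unfolding FF_def x_def[symmetric] y_def[symmetric] by (rule L_ge[OF p])
  then have "FF (\<lambda>u v. S u v - \<epsilon> * T_fun S a b u v) n z \<ge> FF S n z - \<epsilon> * align_score (T_fun S a b) x y \<pi>"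
    using score_lin[of S \<epsilon> "T_fun S a b" x y \<pi>] F e1 by simp
  then have "(FF S n z - FF (\<lambda>u v. S u v - \<epsilon> * T_fun S a b u v) n z) / \<epsilon> \<le> align_score (T_fun S a b) x y \<pi>"
    using e by (simp add: divide_le_eq algebra_simps)
  with TI show ?thesis by linarith
qed

definition gg :: "'a pmf \<Rightarrow> 'a \<Rightarrow> 'a \<Rightarrow> 'a \<Rightarrow> real" where
  "gg p a b c = (if c = a then 1 else if c = b then - (pmf p a / pmf p b) else 0)"

lemma E_gg:
  fixes p :: "'a::finite pmf"
  assumes "a \<noteq> b" "pmf p b > 0"
  shows "EE p (\<lambda>c. h c * gg p a b c) = pmf p a * h a - pmf p a * h b"
proof -
  have "EE p (\<lambda>c. h c * gg p a b c) = (\<Sum>c\<in>{a, b}. h c * gg p a b c * pmf p c)"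
    by (rule integral_measure_pmf_real) (auto simp: gg_def split: if_splits)
  also have "\<dots> = pmf p a * h a - pmf p a * h b"
    using assms by (simp add: gg_def field_simps)
  finally show ?thesis .
qed

lemma E_ind:
  fixes p :: "'a::finite pmf"
  shows "EE p (\<lambda>c. if c = a then v c else 0) = pmf p a * v a"
proof -
  have "EE p (\<lambda>c. if c = a then v c else 0) = (\<Sum>c\<in>{a}. (if c = a then v c else 0) * pmf p c)"
    by (rule integral_measure_pmf_real) (auto split: if_splits)
  then show ?thesis by simp
qed

lemma cov_i:
  fixes p :: "'a::finite pmf" and F :: "'a list \<Rightarrow> real"
  assumes "a \<noteq> b" "pmf p b > 0" "i < N"
  shows "EE (replicate_pmf N p) (\<lambda>z. F z * gg p a b (z ! i))
     = - EE (replicate_pmf N p) (\<lambda>z. if z ! i = a then F (z[i:=b]) - F z else 0)"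
proof -
  let ?R = "replicate_pmf N p"
  have "EE ?R (\<lambda>z. F z * gg p a b (z ! i)) = EE ?R (\<lambda>z. EE p (\<lambda>c. F (z[i:=c]) * gg p a b (z[i:=c] ! i)))"
    using resample[OF assms(3), of p "\<lambda>z. F z * gg p a b (z ! i)"] by simp
  also have "\<dots> = EE ?R (\<lambda>z. pmf p a * F (z[i:=a]) - pmf p a * F (z[i:=b]))"
  proof (rule E_cong)
    fix z assume "z \<in> set_pmf ?R"
    then have "length z = N" by (rule len_rep)
    then have "EE p (\<lambda>c. F (z[i:=c]) * gg p a b (z[i:=c] ! i)) = EE p (\<lambda>c. F (z[i:=c]) * gg p a b c)"
      using assms(3) by simp
    also have "\<dots> = pmf p a * F (z[i:=a]) - pmf p a * F (z[i:=b])"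
      by (rule E_gg[OF assms(1,2)])
    finally show "EE p (\<lambda>c. F (z[i:=c]) * gg p a b (z[i:=c] ! i)) = pmf p a * F (z[i:=a]) - pmf p a * F (z[i:=b])" .
  qed
  also have "\<dots> = - EE ?R (\<lambda>z. EE p (\<lambda>c. if z[i:=c] ! i = a then F ((z[i:=c])[i:=b]) - F (z[i:=c]) else 0))"
  proof -
    have "EE ?R (\<lambda>z. EE p (\<lambda>c. if z[i:=c] ! i = a then F ((z[i:=c])[i:=b]) - F (z[i:=c]) else 0))
        = EE ?R (\<lambda>z. - (pmf p a * F (z[i:=a]) - pmf p a * F (z[i:=b])))"
    proof (rule E_cong)
      fix z assume "z \<in> set_pmf ?R"
      then have "length z = N" by (rule len_rep)
      then have "EE p (\<lambda>c. if z[i:=c] ! i = a then F ((z[i:=c])[i:=b]) - F (z[i:=c]) else 0)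
          = EE p (\<lambda>c. if c = a then F (z[i:=b]) - F (z[i:=c]) else 0)"
      proof -
        have "(\<lambda>c. if z[i:=c] ! i = a then F ((z[i:=c])[i:=b]) - F (z[i:=c]) else 0)
          = (\<lambda>c. if c = a then F (z[i:=b]) - F (z[i:=c]) else 0)"
          using assms(3) \<open>length z = N\<close> by (auto simp: list_update_overwrite)
        then show ?thesis by simp
      qed
      also have "\<dots> = pmf p a * (F (z[i:=b]) - F (z[i:=a]))" by (rule E_ind)
      finally show "EE p (\<lambda>c. if z[i:=c] ! i = a then F ((z[i:=c])[i:=b]) - F (z[i:=c]) else 0)
          = - (pmf p a * F (z[i:=a]) - pmf p a * F (z[i:=b]))" by (simp add: algebra_simps)
    qed
    also have "\<dots> = - EE ?R (\<lambda>z. pmf p a * F (z[i:=a]) - pmf p a * F (z[i:=b]))"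
      using E_cmult[where M="?R" and c="-1" and f="\<lambda>z. pmf p a * F (z[i:=a]) - pmf p a * F (z[i:=b])", OF fin_rep] by simp
    finally show ?thesis by simp
  qed
  also have "EE ?R (\<lambda>z. EE p (\<lambda>c. if z[i:=c] ! i = a then F ((z[i:=c])[i:=b]) - F (z[i:=c]) else 0))
      = EE ?R (\<lambda>z. if z ! i = a then F (z[i:=b]) - F z else 0)"
    by (rule resample[OF assms(3)])
  finally show ?thesis .
qed

lemma E_gg_i:
  fixes p :: "'a::finite pmf"
  assumes "a \<noteq> b" "pmf p b > 0" "i < N"
  shows "EE (replicate_pmf N p) (\<lambda>z. gg p a b (z ! i)) = 0"
proof -
  have "(\<lambda>z. if z ! i = a then (1::real) - 1 else 0) = (\<lambda>_. 0)" by auto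
  then show ?thesis using cov_i[OF assms, of "\<lambda>_. 1"] by simp
qed

lemma gg_diff:
  assumes "pmf p b > 0"
  shows "\<bar>gg p a b c - gg p a b d\<bar> \<le> 1 + pmf p a / pmf p b"
proof -
  have h: "pmf p a / pmf p b \<ge> 0" using assms by simp
  have gen: "\<bar>(if c = a then 1 else if c = b then - q else 0) - (if d = a then 1 else if d = b then - q else 0)\<bar> \<le> 1 + q"
    if "q \<ge> 0" for q :: real using that by auto
  show ?thesis unfolding gg_def by (rule gen[OF h])
qed

lemma cs_lower:
  fixes M :: "'b pmf"
  assumes fin: "finite (set_pmf M)" and C: "EE M (\<lambda>z. U z * W z) = C"
    and V: "EE M (\<lambda>z. (W z)\<^sup>2) \<le> V" and V0: "V > 0"
  shows "EE M (\<lambda>z. (U z)\<^sup>2) \<ge> C\<^sup>2 / V"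
proof -
  define t where "t = C / V"
  have "0 \<le> EE M (\<lambda>z. (U z - t * W z)\<^sup>2)" by (rule E_nonneg[OF fin]) simp
  also have "EE M (\<lambda>z. (U z - t * W z)\<^sup>2) = EE M (\<lambda>z. (U z)\<^sup>2 + (- 2 * t) * (U z * W z) + t\<^sup>2 * (W z)\<^sup>2)"
    by (rule E_cong) (simp add: power2_eq_square algebra_simps)
  also have "\<dots> = EE M (\<lambda>z. (U z)\<^sup>2) - 2 * t * C + t\<^sup>2 * EE M (\<lambda>z. (W z)\<^sup>2)"
    using fin C by (simp add: E_add E_cmult E_diff)
  also have "\<dots> \<le> EE M (\<lambda>z. (U z)\<^sup>2) - 2 * t * C + t\<^sup>2 * V"
    using V by (intro add_left_mono mult_left_mono) auto
  finally have "EE M (\<lambda>z. (U z)\<^sup>2) \<ge> 2 * t * C - t\<^sup>2 * V" by simp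
  also have "2 * t * C - t\<^sup>2 * V = C\<^sup>2 / V" using V0 by (simp add: t_def power2_eq_square field_simps)
  finally show ?thesis .
qed




lemma W_diff:
  assumes "length z = N" "i < N" "pmf p b > 0"
  shows "\<bar>(\<Sum>j<N. gg p a b (z[i:=c] ! j)) - (\<Sum>j<N. gg p a b (z ! j))\<bar> \<le> 1 + pmf p a / pmf p b"
proof -
  have "(\<Sum>j<N. gg p a b (z[i:=c] ! j)) - (\<Sum>j<N. gg p a b (z ! j))
      = (\<Sum>j<N. if j = i then gg p a b c - gg p a b (z ! i) else 0)"
    by (subst sum_subtractf[symmetric], rule sum.cong) (use assms in \<open>auto simp: nth_list_update\<close>)
  also have "\<dots> = gg p a b c - gg p a b (z ! i)" using assms by simp
  finally show ?thesis using gg_diff[OF assms(3)] by simp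
qed

lemma var_upper:
  fixes p :: "'a::finite pmf"
  assumes M: "\<And>u v. \<bar>S u v\<bar> \<le> M"
  shows "Ln_var p S n \<le> real n * (32 * M\<^sup>2)"
proof -
  have "Ln_var p S n \<le> real (n + n) * (4 * M)\<^sup>2"
    unfolding var_FF
    by (rule efron_stein) (rule FF_diff[where S=S, OF _ _ M], auto)
  then show ?thesis by (simp add: power2_eq_square algebra_simps)
qed

lemma var_lower:
  fixes p :: "'a::finite pmf" and S :: "'a option \<Rightarrow> 'a option \<Rightarrow> real"
  assumes ab: "a \<noteq> b" and pb: "pmf p b > 0" and sym: "\<And>u v. S u v = S v u"
    and e: "\<epsilon> > 0" and n: "n \<ge> 1" and d: "\<delta> > 0"
    and gap: "lambda_n p S n - lambda_n p (\<lambda>u v. S u v - \<epsilon> * T_fun S a b u v) n > \<delta> / 2"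
  shows "Ln_var p S n \<ge> real n * (\<delta>\<^sup>2 / (8 * \<epsilon>\<^sup>2 * (1 + pmf p a / pmf p b)\<^sup>2))"
proof -
  define S' where "S' = (\<lambda>u v. S u v - \<epsilon> * T_fun S a b u v)"
  define N where "N = n + n"
  define R where "R = replicate_pmf N p"
  define F where "F = FF S n"
  define \<mu> where "\<mu> = EE R F"
  define W where "W = (\<lambda>z. \<Sum>i<N. gg p a b (z ! i))"
  define Kg where "Kg = 1 + pmf p a / pmf p b"
  have finR: "finite (set_pmf R)" unfolding R_def by (rule fin_rep)
  have Kg1: "Kg \<ge> 1" unfolding Kg_def using pb by simp
  have npos: "real n > 0" using n by simp
  have EW: "EE R W = 0"
    unfolding W_def R_def by (subst E_sumI[OF fin_rep]) (simp add: E_gg_i[OF ab pb])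
  define Rz where "Rz = (\<lambda>z. \<Sum>i<N. if z ! i = a then F (z[i:=b]) - F z else 0)"
  have EFW: "EE R (\<lambda>z. F z * W z) = - EE R Rz"
  proof -
    have "EE R (\<lambda>z. F z * W z) = (\<Sum>i<N. EE R (\<lambda>z. F z * gg p a b (z ! i)))"
      unfolding W_def sum_distrib_left by (rule E_sumI[OF finR])
    also have "\<dots> = (\<Sum>i<N. - EE R (\<lambda>z. if z ! i = a then F (z[i:=b]) - F z else 0))"
      unfolding R_def by (intro sum.cong refl cov_i[OF ab pb]) simp
    also have "\<dots> = - EE R Rz"
      unfolding Rz_def by (subst E_sumI[OF finR]) (simp add: sum_negf)
    finally show ?thesis .
  qed
  have mean_gap: "Ln_mean p S n - Ln_mean p S' n > real n * (\<delta> / 2)"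
  proof -
    have "Ln_mean p S n - Ln_mean p S' n = real n * (lambda_n p S n - lambda_n p S' n)"
      using npos by (simp add: lambda_n_def field_simps)
    also have "\<dots> > real n * (\<delta> / 2)" using gap npos unfolding S'_def by simp
    finally show ?thesis .
  qed
  have ER: "EE R Rz \<ge> (Ln_mean p S n - Ln_mean p S' n) / \<epsilon>"
  proof -
    have "EE R Rz \<ge> EE R (\<lambda>z. (1/\<epsilon>) * (F z - FF S' n z))"
    proof (rule E_mono[OF finR])
      fix z assume "z \<in> set_pmf R"
      then have "length z = n + n" unfolding R_def N_def by (rule len_rep)
      from R_bound[where a=a and b=b, OF sym e this] show "(1/\<epsilon>) * (F z - FF S' n z) \<le> Rz z"
        unfolding Rz_def F_def S'_def N_def by simp
    qed
    also have "EE R (\<lambda>z. (1/\<epsilon>) * (F z - FF S' n z)) = (Ln_mean p S n - Ln_mean p S' n) / \<epsilon>"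
      unfolding mean_FF R_def N_def F_def by (simp add: E_cmult E_diff fin_rep)
    finally show ?thesis .
  qed
  define C where "C = EE R (\<lambda>z. (F z - \<mu>) * W z)"
  have C_eq: "C = - EE R Rz"
  proof -
    have "C = EE R (\<lambda>z. F z * W z) - \<mu> * EE R W"
      unfolding C_def by (simp add: left_diff_distrib E_diff[OF finR] E_cmult[OF finR])
    then show ?thesis using EFW EW by simp
  qed
  have C_le: "C \<le> - (real n * \<delta> / (2 * \<epsilon>))"
  proof -
    have "(Ln_mean p S n - Ln_mean p S' n) / \<epsilon> \<ge> (real n * (\<delta> / 2)) / \<epsilon>"
      using mean_gap e by (intro divide_right_mono) auto
    then show ?thesis using C_eq ER by (simp add: field_simps)
  qed
  have C2: "C\<^sup>2 \<ge> (real n * \<delta> / (2 * \<epsilon>))\<^sup>2"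
  proof -
    have "0 \<le> real n * \<delta> / (2 * \<epsilon>)" using npos d e by simp
    then have "(real n * \<delta> / (2 * \<epsilon>))\<^sup>2 \<le> (- C)\<^sup>2" using C_le by (intro power_mono) auto
    then show ?thesis by simp
  qed
  have EW2: "EE R (\<lambda>z. (W z)\<^sup>2) \<le> real N * Kg\<^sup>2"
  proof -
    have "EE R (\<lambda>z. (W z - EE R W)\<^sup>2) \<le> real N * Kg\<^sup>2"
      unfolding R_def
      by (rule efron_stein) (unfold W_def Kg_def, rule W_diff[OF _ _ pb], auto)
    then show ?thesis using EW by simp
  qed
  have V0: "real N * Kg\<^sup>2 > 0" using npos Kg1 unfolding N_def by simp
  have "EE R (\<lambda>z. (F z - \<mu>)\<^sup>2) \<ge> C\<^sup>2 / (real N * Kg\<^sup>2)"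
    by (rule cs_lower[OF finR C_def[symmetric] EW2 V0])
  moreover have "C\<^sup>2 / (real N * Kg\<^sup>2) \<ge> (real n * \<delta> / (2 * \<epsilon>))\<^sup>2 / (real N * Kg\<^sup>2)"
    using C2 V0 by (intro divide_right_mono) auto
  moreover have "(real n * \<delta> / (2 * \<epsilon>))\<^sup>2 / (real N * Kg\<^sup>2) = real n * (\<delta>\<^sup>2 / (8 * \<epsilon>\<^sup>2 * Kg\<^sup>2))"
    using npos e Kg1 unfolding N_def by (simp add: power2_eq_square field_simps)
  moreover have "Ln_var p S n = EE R (\<lambda>z. (F z - \<mu>)\<^sup>2)"
    unfolding var_FF R_def N_def F_def \<mu>_def ..
  ultimately show ?thesis unfolding Kg_def by linarith
qed

theorem mainTheorem3:
  fixes p :: "'a::finite pmf"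
    and S :: "'a option \<Rightarrow> 'a option \<Rightarrow> real"
    and a b :: 'a
  assumes "a \<noteq> b"
    and "pmf p a > 0" and "pmf p b > 0"
    and "\<And>u v. S u v = S v u"
    and "\<exists>\<epsilon>>0. lambda p S - lambda p (\<lambda>u v. S u v - \<epsilon> * T_fun S a b u v) > 0"
  shows "(\<lambda>n. Ln_var p S n) \<in> \<Theta>(\<lambda>n. real n)"
proof -
  obtain \<epsilon> where e: "\<epsilon> > 0" and hyp: "lambda p S - lambda p (\<lambda>u v. S u v - \<epsilon> * T_fun S a b u v) > 0"
    using assms(5) by blast
  define S' where "S' = (\<lambda>u v. S u v - \<epsilon> * T_fun S a b u v)"
  define \<delta> where "\<delta> = lambda p S - lambda p S'"
  have d: "\<delta> > 0" using hyp unfolding \<delta>_def S'_def by simp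
  obtain M where M: "\<And>u v. \<bar>S u v\<bar> \<le> M" using bound_exists[of S] by blast
  have M0: "M \<ge> 0" using M[of None None] by simp
  have "(\<lambda>n. lambda_n p S n - lambda_n p S' n) \<longlonglongrightarrow> \<delta>"
    unfolding \<delta>_def by (intro tendsto_diff lambda_conv)
  then have ev1: "eventually (\<lambda>n. \<delta> / 2 < lambda_n p S n - lambda_n p S' n) sequentially"
    by (rule order_tendstoD(1)) (use d in simp)
  define c1 where "c1 = \<delta>\<^sup>2 / (8 * \<epsilon>\<^sup>2 * (1 + pmf p a / pmf p b)\<^sup>2)"
  have k: "1 + pmf p a / pmf p b > 0" using assms(2,3) by (simp add: add_pos_pos)
  have c1: "c1 > 0" unfolding c1_def using d e k by (intro divide_pos_pos mult_pos_pos) auto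
  show ?thesis
  proof (rule bigthetaI'[of c1 "32 * M\<^sup>2 + 1"])
    show "c1 > 0" by (rule c1)
    show "32 * M\<^sup>2 + 1 > 0" by (simp add: add_nonneg_pos)
    show "eventually (\<lambda>n. c1 * norm (real n) \<le> norm (Ln_var p S n) \<and> norm (Ln_var p S n) \<le> (32 * M\<^sup>2 + 1) * norm (real n)) at_top"
      using ev1 eventually_ge_at_top[of 1]
    proof eventually_elim
      case (elim n)
      have lo: "Ln_var p S n \<ge> real n * c1"
        unfolding c1_def by (rule var_lower[OF assms(1,3,4) e elim(2) d]) (use elim(1) in \<open>simp add: S'_def\<close>)
      have nn: "Ln_var p S n \<ge> 0"
        unfolding var_FF by (rule E_nonneg[OF fin_rep]) simp
      have up: "Ln_var p S n \<le> real n * (32 * M\<^sup>2)" by (rule var_upper[OF M])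
      have "real n * (32 * M\<^sup>2) \<le> real n * (32 * M\<^sup>2 + 1)" by (intro mult_left_mono) auto
      then show ?case using lo nn up by (simp add: algebra_simps)
    qed
  qed
qed


end
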